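(* Let $\mathcal C$ be a $G$-category (the action need not be free). Then there is a weakly $G$-equivariant equivalence $\mathcal C\to(\mathcal C/G)\#G$, where $(\mathcal C/G)\#G$ carries the free $G$-action $\mu\cdot x^{(\alpha)}=x^{(\mu\alpha)}$, $\mu\cdot f=f$.
   Context: $\Bbbk$ is a commutative ring; all categories are $\Bbbk$-linear; $G$ is a group; a $G$-category is a category with a group homomorphism $G\to\operatorname{Aut}$, $\alpha\mapsto A_\alpha$, written $\alpha x,\alpha f$. A weakly $G$-equivariant functor is a pair $(F,\rho)$, $F$ a functor between $G$-categories and $\rho_\alpha\colon A_\alpha F\to FA_\alpha$ natural isomorphisms with $(\rho_\beta A_\alpha)(A_\beta\rho_\alpha)=\rho_{\beta\alpha}$. Orbit category $\mathcal C/G$: objects of $\mathcal C$; morphisms $x\to y$ are row- and column-finite families $(f_{\beta,\alpha})_{(\alpha,\beta)\in G\times G}$, $f_{\beta,\alpha}\in\mathcal C(\alpha x,\beta y)$, with $f_{\gamma\beta,\gamma\alpha}=\gamma(f_{\beta,\alpha})$; composition $(gf)_{\beta,\alpha}=\sum_\gamma g_{\beta,\gamma}f_{\gamma,\alpha}$. It is $G$-graded by $(\mathcal C/G)^\alpha(x,y):=P^{(1)}_{x,y}(\mathcal C(\alpha x,y))$ where $P^{(1)}_{x,y}\colon\bigoplus_\alpha\mathcal C(\alpha x,y)\to(\mathcal C/G)(x,y)$, $(f_\alpha)\mapsto(\mu(f_{\mu^{-1}\lambda}))_{(\lambda,\mu)}$, is bijective. For a $G$-graded category $\mathcal B$ (decompositions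 $\mathcal B(x,y)=\bigoplus_\alpha\mathcal B^\alpha(x,y)$ with $\mathcal B^\beta\cdot\mathcal B^\alpha\subseteq\mathcal B^{\beta\alpha}$), the smash product $\mathcal B\#G$ has objects $x^{(\alpha)}$ ($x\in\mathcal B$, $\alpha\in G$), $(\mathcal B\#G)(x^{(\alpha)},y^{(\beta)})=\mathcal B^{\beta^{-1}\alpha}(x,y)$, composition from $\mathcal B$. *)

theory Defs
  imports Main "HOL-Library.Function_Algebras"
begin

text \<open>
  A Bbbk-linear category: objects of type 'o, morphisms encoded in an abelian group 'm
  (the addition of the group is the addition of each hom-module, 0 is the zero morphism
  of every hom-module), hom-sets Hom x y, composition cmp g f (= g o f), identities,
  and scalar multiplication by the commutative ring 'k.
\<close>

record ('o, 'm, 'k) lincat =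
  Hom :: "'o \<Rightarrow> 'o \<Rightarrow> 'm set"
  cmp :: "'m \<Rightarrow> 'm \<Rightarrow> 'm"
  idt :: "'o \<Rightarrow> 'm"
  scl :: "'k \<Rightarrow> 'm \<Rightarrow> 'm"

definition lincat :: "('o, 'm::ab_group_add, 'k::comm_ring_1) lincat \<Rightarrow> bool" where
  "lincat C \<longleftrightarrow>
    (\<forall>x y. 0 \<in> Hom C x y
       \<and> (\<forall>f\<in>Hom C x y. \<forall>g\<in>Hom C x y. f + g \<in> Hom C x y)
       \<and> (\<forall>f\<in>Hom C x y. - f \<in> Hom C x y)
       \<and> (\<forall>a. \<forall>f\<in>Hom C x y. scl C a f \<in> Hom C x y)
       \<and> (\<forall>f\<in>Hom C x y. scl C 1 f = f)
       \<and> (\<forall>a b. \<forall>f\<in>Hom C x y. scl C (a * b) f = scl C a (scl C b f))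
       \<and> (\<forall>a b. \<forall>f\<in>Hom C x y. scl C (a + b) f = scl C a f + scl C b f)
       \<and> (\<forall>a. \<forall>f\<in>Hom C x y. \<forall>g\<in>Hom C x y. scl C a (f + g) = scl C a f + scl C a g))
  \<and> (\<forall>x. idt C x \<in> Hom C x x)
  \<and> (\<forall>x y z. \<forall>f\<in>Hom C x y. \<forall>g\<in>Hom C y z. cmp C g f \<in> Hom C x z)
  \<and> (\<forall>x y. \<forall>f\<in>Hom C x y. cmp C (idt C y) f = f \<and> cmp C f (idt C x) = f)
  \<and> (\<forall>w x y z. \<forall>f\<in>Hom C w x. \<forall>g\<in>Hom C x y. \<forall>h\<in>Hom C y z.
        cmp C h (cmp C g f) = cmp C (cmp C h g) f)
  \<and> (\<forall>x y z. \<forall>f\<in>Hom C x y. \<forall>f'\<in>Hom C x y. \<forall>g\<in>Hom C y z. \<forall>g'\<in>Hom C y z.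
        cmp C (g + g') f = cmp C g f + cmp C g' f
      \<and> cmp C g (f + f') = cmp C g f + cmp C g f'
      \<and> (\<forall>a. cmp C (scl C a g) f = scl C a (cmp C g f)
             \<and> cmp C g (scl C a f) = scl C a (cmp C g f)))"

definition lin_functor ::
  "('o1, 'm1::ab_group_add, 'k) lincat \<Rightarrow> ('o2, 'm2::ab_group_add, 'k) lincat
   \<Rightarrow> ('o1 \<Rightarrow> 'o2) \<Rightarrow> ('o1 \<Rightarrow> 'o1 \<Rightarrow> 'm1 \<Rightarrow> 'm2) \<Rightarrow> bool" where
  "lin_functor C D Fo Fm \<longleftrightarrow>
    (\<forall>x y. \<forall>f\<in>Hom C x y. Fm x y f \<in> Hom D (Fo x) (Fo y))
  \<and> (\<forall>x y z. \<forall>f\<in>Hom C x y. \<forall>g\<in>Hom C y z.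
        Fm x z (cmp C g f) = cmp D (Fm y z g) (Fm x y f))
  \<and> (\<forall>x. Fm x x (idt C x) = idt D (Fo x))
  \<and> (\<forall>x y. \<forall>f\<in>Hom C x y. \<forall>g\<in>Hom C x y. Fm x y (f + g) = Fm x y f + Fm x y g)
  \<and> (\<forall>a x y. \<forall>f\<in>Hom C x y. Fm x y (scl C a f) = scl D a (Fm x y f))"

definition is_iso :: "('o, 'm, 'k) lincat \<Rightarrow> 'o \<Rightarrow> 'o \<Rightarrow> 'm \<Rightarrow> bool" where
  "is_iso D x y f \<longleftrightarrow> f \<in> Hom D x y \<and>
     (\<exists>g\<in>Hom D y x. cmp D g f = idt D x \<and> cmp D f g = idt D y)"

definition nat_iso ::
  "('o1, 'm1, 'k) lincat \<Rightarrow> ('o2, 'm2, 'k) lincat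
   \<Rightarrow> ('o1 \<Rightarrow> 'o2) \<Rightarrow> ('o1 \<Rightarrow> 'o1 \<Rightarrow> 'm1 \<Rightarrow> 'm2)
   \<Rightarrow> ('o1 \<Rightarrow> 'o2) \<Rightarrow> ('o1 \<Rightarrow> 'o1 \<Rightarrow> 'm1 \<Rightarrow> 'm2)
   \<Rightarrow> ('o1 \<Rightarrow> 'm2) \<Rightarrow> bool" where
  "nat_iso C D F1o F1m F2o F2m eta \<longleftrightarrow>
    (\<forall>x. is_iso D (F1o x) (F2o x) (eta x))
  \<and> (\<forall>x y. \<forall>f\<in>Hom C x y. cmp D (F2m x y f) (eta x) = cmp D (eta y) (F1m x y f))"

definition equivalence ::
  "('o1, 'm1::ab_group_add, 'k) lincat \<Rightarrow> ('o2, 'm2::ab_group_add, 'k) lincat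
   \<Rightarrow> ('o1 \<Rightarrow> 'o2) \<Rightarrow> ('o1 \<Rightarrow> 'o1 \<Rightarrow> 'm1 \<Rightarrow> 'm2) \<Rightarrow> bool" where
  "equivalence C D Fo Fm \<longleftrightarrow> lin_functor C D Fo Fm \<and>
    (\<exists>Ho Hm eta eps. lin_functor D C Ho Hm
       \<and> nat_iso C C (\<lambda>x. x) (\<lambda>x y f. f)
                      (\<lambda>x. Ho (Fo x)) (\<lambda>x y f. Hm (Fo x) (Fo y) (Fm x y f)) eta
       \<and> nat_iso D D (\<lambda>u. Fo (Ho u)) (\<lambda>u v g. Fm (Ho u) (Ho v) (Hm u v g))
                      (\<lambda>u. u) (\<lambda>u v g. g) eps)"

text \<open>G-category: a group homomorphism alpha \<mapsto> A_alpha into the linear automorphisms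
  (the group G is a type of class group_add; the group product alpha beta is written alpha + beta).\<close>

definition Gcat ::
  "('o, 'm::ab_group_add, 'k::comm_ring_1) lincat \<Rightarrow> ('g::group_add \<Rightarrow> 'o \<Rightarrow> 'o)
   \<Rightarrow> ('g \<Rightarrow> 'o \<Rightarrow> 'o \<Rightarrow> 'm \<Rightarrow> 'm) \<Rightarrow> bool" where
  "Gcat C aO aM \<longleftrightarrow> lincat C
  \<and> (\<forall>\<alpha>. lin_functor C C (aO \<alpha>) (aM \<alpha>))
  \<and> (\<forall>x. aO 0 x = x)
  \<and> (\<forall>\<alpha> \<beta> x. aO (\<alpha> + \<beta>) x = aO \<alpha> (aO \<beta> x))
  \<and> (\<forall>x y. \<forall>f\<in>Hom C x y. aM 0 x y f = f)
  \<and> (\<forall>\<alpha> \<beta> x y. \<forall>f\<in>Hom C x y.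
        aM (\<alpha> + \<beta>) x y f = aM \<alpha> (aO \<beta> x) (aO \<beta> y) (aM \<beta> x y f))"

definition weq_functor ::
  "('o1, 'm1::ab_group_add, 'k) lincat \<Rightarrow> ('g::group_add \<Rightarrow> 'o1 \<Rightarrow> 'o1)
   \<Rightarrow> ('g \<Rightarrow> 'o1 \<Rightarrow> 'o1 \<Rightarrow> 'm1 \<Rightarrow> 'm1)
   \<Rightarrow> ('o2, 'm2::ab_group_add, 'k) lincat \<Rightarrow> ('g \<Rightarrow> 'o2 \<Rightarrow> 'o2)
   \<Rightarrow> ('g \<Rightarrow> 'o2 \<Rightarrow> 'o2 \<Rightarrow> 'm2 \<Rightarrow> 'm2)
   \<Rightarrow> ('o1 \<Rightarrow> 'o2) \<Rightarrow> ('o1 \<Rightarrow> 'o1 \<Rightarrow> 'm1 \<Rightarrow> 'm2) \<Rightarrow> ('g \<Rightarrow> 'o1 \<Rightarrow> 'm2) \<Rightarrow> bool" where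
  "weq_functor C aO aM D bO bM Fo Fm \<rho> \<longleftrightarrow> lin_functor C D Fo Fm
  \<and> (\<forall>\<alpha> x. is_iso D (bO \<alpha> (Fo x)) (Fo (aO \<alpha> x)) (\<rho> \<alpha> x))
  \<and> (\<forall>\<alpha> x y. \<forall>f\<in>Hom C x y.
        cmp D (Fm (aO \<alpha> x) (aO \<alpha> y) (aM \<alpha> x y f)) (\<rho> \<alpha> x)
      = cmp D (\<rho> \<alpha> y) (bM \<alpha> (Fo x) (Fo y) (Fm x y f)))
  \<and> (\<forall>\<alpha> \<beta> x. cmp D (\<rho> \<beta> (aO \<alpha> x)) (bM \<beta> (bO \<alpha> (Fo x)) (Fo (aO \<alpha> x)) (\<rho> \<alpha> x))
             = \<rho> (\<beta> + \<alpha>) x)"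

text \<open>A morphism x \<rightarrow> y is a family f with f (beta, alpha) = f_{beta,alpha}
  in C(alpha x, beta y), row- and column-finite, with f_{gamma beta, gamma alpha} = gamma(f_{beta,alpha}).\<close>

definition orb_hom ::
  "('o, 'm::ab_group_add, 'k) lincat \<Rightarrow> ('g::group_add \<Rightarrow> 'o \<Rightarrow> 'o)
   \<Rightarrow> ('g \<Rightarrow> 'o \<Rightarrow> 'o \<Rightarrow> 'm \<Rightarrow> 'm) \<Rightarrow> 'o \<Rightarrow> 'o \<Rightarrow> ('g \<times> 'g \<Rightarrow> 'm) set" where
  "orb_hom C aO aM x y = {f.
      (\<forall>\<alpha> \<beta>. f (\<beta>, \<alpha>) \<in> Hom C (aO \<alpha> x) (aO \<beta> y))
    \<and> (\<forall>\<alpha>. finite {\<beta>. f (\<beta>, \<alpha>) \<noteq> 0})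
    \<and> (\<forall>\<beta>. finite {\<alpha>. f (\<beta>, \<alpha>) \<noteq> 0})
    \<and> (\<forall>\<gamma> \<alpha> \<beta>. f (\<gamma> + \<beta>, \<gamma> + \<alpha>) = aM \<gamma> (aO \<alpha> x) (aO \<beta> y) (f (\<beta>, \<alpha>)))}"

definition orb_cmp ::
  "('o, 'm::ab_group_add, 'k) lincat \<Rightarrow> ('g \<times> 'g \<Rightarrow> 'm) \<Rightarrow> ('g \<times> 'g \<Rightarrow> 'm) \<Rightarrow> ('g \<times> 'g \<Rightarrow> 'm)" where
  "orb_cmp C g f = (\<lambda>(\<beta>, \<alpha>). \<Sum>\<gamma>\<in>{\<gamma>. f (\<gamma>, \<alpha>) \<noteq> 0}. cmp C (g (\<beta>, \<gamma>)) (f (\<gamma>, \<alpha>)))"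

definition orb_idt ::
  "('o, 'm::ab_group_add, 'k) lincat \<Rightarrow> ('g \<Rightarrow> 'o \<Rightarrow> 'o) \<Rightarrow> 'o \<Rightarrow> ('g \<times> 'g \<Rightarrow> 'm)" where
  "orb_idt C aO x = (\<lambda>(\<beta>, \<alpha>). if \<beta> = \<alpha> then idt C (aO \<alpha> x) else 0)"

definition orbit_cat ::
  "('o, 'm::ab_group_add, 'k) lincat \<Rightarrow> ('g::group_add \<Rightarrow> 'o \<Rightarrow> 'o)
   \<Rightarrow> ('g \<Rightarrow> 'o \<Rightarrow> 'o \<Rightarrow> 'm \<Rightarrow> 'm) \<Rightarrow> ('o, 'g \<times> 'g \<Rightarrow> 'm, 'k) lincat" where
  "orbit_cat C aO aM =
     \<lparr> Hom = orb_hom C aO aM, cmp = orb_cmp C, idt = orb_idt C aO,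
       scl = (\<lambda>a f i. scl C a (f i)) \<rparr>"

text \<open>P^(1)_{x,y} applied to a homogeneous element g of degree delta, g in C(delta x, y):
  the family (mu(f_{mu^-1 lambda}))_{(lambda,mu)}, i.e. entry (mu, lambda) is mu(g) if
  mu^-1 lambda = delta, and 0 otherwise.\<close>

definition orb_P1 ::
  "('g::group_add \<Rightarrow> 'o \<Rightarrow> 'o) \<Rightarrow> ('g \<Rightarrow> 'o \<Rightarrow> 'o \<Rightarrow> 'm::ab_group_add \<Rightarrow> 'm)
   \<Rightarrow> 'g \<Rightarrow> 'o \<Rightarrow> 'o \<Rightarrow> 'm \<Rightarrow> ('g \<times> 'g \<Rightarrow> 'm)" where
  "orb_P1 aO aM \<delta> x y g =
     (\<lambda>(\<mu>, \<nu>). if - \<mu> + \<nu> = \<delta> then aM \<mu> (aO \<delta> x) y g else 0)"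

definition orb_grade ::
  "('o, 'm::ab_group_add, 'k) lincat \<Rightarrow> ('g::group_add \<Rightarrow> 'o \<Rightarrow> 'o)
   \<Rightarrow> ('g \<Rightarrow> 'o \<Rightarrow> 'o \<Rightarrow> 'm \<Rightarrow> 'm) \<Rightarrow> 'g \<Rightarrow> 'o \<Rightarrow> 'o \<Rightarrow> ('g \<times> 'g \<Rightarrow> 'm) set" where
  "orb_grade C aO aM \<delta> x y = orb_P1 aO aM \<delta> x y ` Hom C (aO \<delta> x) y"

text \<open>Smash product of a G-graded category B (grading given by grade delta x y):
  objects x^(alpha) = (x, alpha), (B#G)(x^(alpha), y^(beta)) = B^{beta^-1 alpha}(x,y).\<close>

definition smash ::
  "('o, 'm, 'k) lincat \<Rightarrow> ('g::group_add \<Rightarrow> 'o \<Rightarrow> 'o \<Rightarrow> 'm set) \<Rightarrow> ('o \<times> 'g, 'm, 'k) lincat" where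
  "smash B grade =
     \<lparr> Hom = (\<lambda>(x, \<alpha>) (y, \<beta>). grade (- \<beta> + \<alpha>) x y), cmp = cmp B,
       idt = (\<lambda>(x, \<alpha>). idt B x), scl = scl B \<rparr>"

definition smash_orbit ::
  "('o, 'm::ab_group_add, 'k) lincat \<Rightarrow> ('g::group_add \<Rightarrow> 'o \<Rightarrow> 'o)
   \<Rightarrow> ('g \<Rightarrow> 'o \<Rightarrow> 'o \<Rightarrow> 'm \<Rightarrow> 'm) \<Rightarrow> ('o \<times> 'g, 'g \<times> 'g \<Rightarrow> 'm, 'k) lincat" where
  "smash_orbit C aO aM = smash (orbit_cat C aO aM) (orb_grade C aO aM)"

definition smash_actO :: "'g::group_add \<Rightarrow> 'o \<times> 'g \<Rightarrow> 'o \<times> 'g" where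
  "smash_actO \<mu> X = (fst X, \<mu> + snd X)"

definition smash_actM :: "'g \<Rightarrow> 'o \<times> 'g \<Rightarrow> 'o \<times> 'g \<Rightarrow> 'm \<Rightarrow> 'm" where
  "smash_actM \<mu> X Y f = f"

end

theory Submission
  imports Defs
begin

lemma g1: "(-(m::'g::group_add) + n = e) \<longleftrightarrow> n = m + e"
proof
  assume h: "-m + n = e"
  have "n = m + (-m + n)" by (simp only: add_minus_cancel)
  then show "n = m + e" by (simp only: h)
next
  assume "n = m + e" then show "-m + n = e" by (simp only: minus_add_cancel)
qed
lemma g2: "((a::'g::group_add) + -d = b) \<longleftrightarrow> a = b + d"
proof
  assume h: "a + -d = b"
  have "a = (a + -d) + d" by (simp only: add.assoc left_minus add_0_right)
  then show "a = b + d" by (simp only: h)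
next
  assume "a = b + d" then show "a + -d = b" by (simp only: add.assoc right_minus add_0_right)
qed
lemma grp2: "(-(m::'g::group_add) + n = d2 + d1) \<longleftrightarrow> (n + -d1 = m + d2)"
  unfolding g1 g2 add.assoc ..
lemma e: "(-(m::'g::group_add) + (n + -d1) = d2) \<longleftrightarrow> (-m + n = d2 + d1)"
  unfolding add.assoc[symmetric] g2 ..
lemma grp1: "(-(g::'g::group_add) + n = d) \<longleftrightarrow> g = n + -d"
  unfolding g1 using g2[of n d g] by auto

locale gc =
  fixes C :: "('o, 'm::ab_group_add, 'k::comm_ring_1) lincat"
    and aO :: "'g::group_add \<Rightarrow> 'o \<Rightarrow> 'o"
    and aM :: "'g \<Rightarrow> 'o \<Rightarrow> 'o \<Rightarrow> 'm \<Rightarrow> 'm"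
  assumes G: "Gcat C aO aM"
begin

lemma L: "lincat C" using G unfolding Gcat_def by auto

lemma zero_hom: "0 \<in> Hom C x y" using L unfolding lincat_def by auto
lemma cmp_hom: "f \<in> Hom C x y \<Longrightarrow> g \<in> Hom C y z \<Longrightarrow> cmp C g f \<in> Hom C x z"
  using L unfolding lincat_def by auto
lemma idt_hom: "idt C x \<in> Hom C x x" using L unfolding lincat_def by auto
lemma cmp_idl: "f \<in> Hom C x y \<Longrightarrow> cmp C (idt C y) f = f" using L unfolding lincat_def by auto
lemma cmp_idr: "f \<in> Hom C x y \<Longrightarrow> cmp C f (idt C x) = f" using L unfolding lincat_def by auto
lemma cmp_addr: "f \<in> Hom C x y \<Longrightarrow> f' \<in> Hom C x y \<Longrightarrow> g \<in> Hom C y z \<Longrightarrow>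
   cmp C g (f + f') = cmp C g f + cmp C g f'" using L unfolding lincat_def by auto
lemma cmp_addl: "f \<in> Hom C x y \<Longrightarrow> g' \<in> Hom C y z \<Longrightarrow> g \<in> Hom C y z \<Longrightarrow>
   cmp C (g + g') f = cmp C g f + cmp C g' f" using L unfolding lincat_def by auto

lemma cmp0r: "g \<in> Hom C y z \<Longrightarrow> cmp C g 0 = 0"
proof -
  assume g: "g \<in> Hom C y z"
  have "cmp C g (0 + 0) = cmp C g 0 + cmp C g 0"
    using cmp_addr[OF zero_hom zero_hom g] by simp
  thus ?thesis by simp
qed

lemma cmp0l: "f \<in> Hom C x y \<Longrightarrow> cmp C 0 f = 0"
proof -
  assume f: "f \<in> Hom C x y"
  have "cmp C (0 + 0) f = cmp C 0 f + cmp C 0 f"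
    using cmp_addl[OF f zero_hom zero_hom] by simp
  thus ?thesis by simp
qed

lemma aF: "lin_functor C C (aO a) (aM a)" using G unfolding Gcat_def by auto
lemma aM_hom: "f \<in> Hom C x y \<Longrightarrow> aM a x y f \<in> Hom C (aO a x) (aO a y)"
  using aF unfolding lin_functor_def by auto
lemma aM_cmp: "f \<in> Hom C x y \<Longrightarrow> g \<in> Hom C y z \<Longrightarrow>
   aM a x z (cmp C g f) = cmp C (aM a y z g) (aM a x y f)"
  using aF unfolding lin_functor_def by auto
lemma aM_idt: "aM a x x (idt C x) = idt C (aO a x)"
  using aF unfolding lin_functor_def by auto
lemma aM_add: "f \<in> Hom C x y \<Longrightarrow> g \<in> Hom C x y \<Longrightarrow> aM a x y (f + g) = aM a x y f + aM a x y g"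
  using aF unfolding lin_functor_def by auto
lemma aM_scl: "f \<in> Hom C x y \<Longrightarrow> aM a x y (scl C c f) = scl C c (aM a x y f)"
  using aF unfolding lin_functor_def by auto
lemma aO0[simp]: "aO 0 x = x" using G unfolding Gcat_def by auto
lemma aO_add: "aO (a + b) x = aO a (aO b x)" using G unfolding Gcat_def by auto
lemma aM0: "f \<in> Hom C x y \<Longrightarrow> aM 0 x y f = f" using G unfolding Gcat_def by auto
lemma aM_gadd: "f \<in> Hom C x y \<Longrightarrow> aM (a + b) x y f = aM a (aO b x) (aO b y) (aM b x y f)"
  using G unfolding Gcat_def by auto

abbreviation "P \<equiv> orb_P1 aO aM"

lemma P_entry: "h \<in> Hom C (aO d x) y \<Longrightarrow> P d x y h (m, n) \<in> Hom C (aO m (aO d x)) (aO m y)"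
  by (auto simp: orb_P1_def zero_hom aM_hom)

lemma single:
  assumes "\<And>\<gamma>. f (\<gamma>, a) \<noteq> 0 \<Longrightarrow> \<gamma> = c" and "f (c, a) = 0 \<Longrightarrow> cmp C (g (b, c)) 0 = 0"
  shows "orb_cmp C g f (b, a) = cmp C (g (b, c)) (f (c, a))"
proof (cases "f (c, a) = 0")
  case True
  then have "{\<gamma>. f (\<gamma>, a) \<noteq> 0} = {}" using assms(1) by blast
  then show ?thesis using True assms(2) by (simp add: orb_cmp_def)
next
  case False
  then have "{\<gamma>. f (\<gamma>, a) \<noteq> 0} = {c}" using assms(1) by blast
  then show ?thesis by (simp add: orb_cmp_def)
qed

lemma P_cmp:
  assumes g0: "g0 \<in> Hom C (aO d2 y) z" and f0: "f0 \<in> Hom C (aO d1 x) y"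
  shows "orb_cmp C (P d2 y z g0) (P d1 x y f0) = P (d2 + d1) x z (cmp C g0 (aM d2 (aO d1 x) y f0))"
proof (rule ext, clarify)
  fix m n
  let ?c = "n + - d1"
  have s: "orb_cmp C (P d2 y z g0) (P d1 x y f0) (m, n) = cmp C (P d2 y z g0 (m, ?c)) (P d1 x y f0 (?c, n))"
    apply (rule single)
    subgoal by (auto simp: orb_P1_def grp1 split: if_splits)
    subgoal by (rule cmp0r[OF P_entry[OF g0]])
    done
  have fc: "P d1 x y f0 (?c, n) = aM ?c (aO d1 x) y f0"
    by (simp add: orb_P1_def minus_add add.assoc)
  show "orb_cmp C (P d2 y z g0) (P d1 x y f0) (m, n) = P (d2 + d1) x z (cmp C g0 (aM d2 (aO d1 x) y f0)) (m, n)"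
  proof (cases "- m + n = d2 + d1")
    case True
    then have c: "?c = m + d2" by (simp add: grp2)
    have e: "- m + ?c = d2" unfolding c by (simp add: add.assoc[symmetric])
    have "cmp C (P d2 y z g0 (m, ?c)) (P d1 x y f0 (?c, n))
        = cmp C (aM m (aO d2 y) z g0) (aM m (aO d2 (aO d1 x)) (aO d2 y) (aM d2 (aO d1 x) y f0))"
      unfolding fc using e c aM_gadd[OF f0] by (simp add: orb_P1_def)
    also have "\<dots> = aM m (aO d2 (aO d1 x)) z (cmp C g0 (aM d2 (aO d1 x) y f0))"
      using aM_cmp[OF aM_hom[OF f0] g0] by simp
    finally show ?thesis using s True by (simp add: orb_P1_def aO_add)
  next
    case False
    then have e: "- m + ?c \<noteq> d2" by (simp only: e not_False_eq_True)
    show ?thesis using s False e fc cmp0l[OF aM_hom[OF f0]] by (simp add: orb_P1_def)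
  qed
qed

abbreviation "D \<equiv> smash_orbit C aO aM"

lemma D_Hom: "Hom D (x,a) (y,b) = P (-b+a) x y ` Hom C (aO (-b+a) x) y"
  by (simp add: smash_orbit_def smash_def orbit_cat_def orb_grade_def)
lemma D_cmp: "cmp D = orb_cmp C"
  by (simp add: smash_orbit_def smash_def orbit_cat_def)
lemma D_idt: "idt D (x,a) = orb_idt C aO x"
  by (simp add: smash_orbit_def smash_def orbit_cat_def)
lemma D_scl: "scl D c f = (\<lambda>i. scl C c (f i))"
  by (simp add: smash_orbit_def smash_def orbit_cat_def)

lemma scl_addr: "f \<in> Hom C x y \<Longrightarrow> g \<in> Hom C x y \<Longrightarrow> scl C c (f + g) = scl C c f + scl C c g"
  using L unfolding lincat_def by auto
lemma cmp_idid[simp]: "cmp C (idt C x) (idt C x) = idt C x"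
  by (rule cmp_idl[OF idt_hom])
lemma scl0: "scl C c 0 = 0"
proof -
  have "scl C c (0 + 0) = scl C c 0 + scl C c 0"
    by (rule scl_addr[OF zero_hom zero_hom])
  thus ?thesis by simp
qed
lemma scl_hom: "f \<in> Hom C x y \<Longrightarrow> scl C c f \<in> Hom C x y"
  using L unfolding lincat_def by auto

lemma aO_inv1: "aO (-a) (aO a x) = x"
  by (simp add: aO_add[symmetric])
lemma aO_inv2: "aO a (aO (-a) x) = x"
  by (simp add: aO_add[symmetric])

lemma idt_P: "orb_idt C aO x = P 0 x x (idt C x)"
  by (rule ext) (auto simp: orb_idt_def orb_P1_def aM_idt g1)

definition "rho a x = P a x (aO a x) (idt C (aO a x))"
definition "sig a x = P (-a) (aO a x) x (idt C x)"

lemma rho_hom: "rho a x \<in> Hom D (x,a) (aO a x, 0)"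
  unfolding D_Hom rho_def by (simp add: idt_hom)
lemma sig_hom: "sig a x \<in> Hom D (aO a x, 0) (x, a)"
  unfolding D_Hom sig_def by (simp add: idt_hom aO_inv1)

lemma sr: "orb_cmp C (sig a x) (rho a x) = orb_idt C aO x"
proof -
  have h: "idt C x \<in> Hom C (aO (-a) (aO a x)) x" by (simp add: aO_inv1 idt_hom)
  show ?thesis unfolding sig_def rho_def P_cmp[OF h idt_hom]
    by (simp add: aM_idt aO_inv1 cmp_idl idt_hom idt_P)
qed

lemma rs: "orb_cmp C (rho a x) (sig a x) = orb_idt C aO (aO a x)"
proof -
  have h: "idt C x \<in> Hom C (aO (-a) (aO a x)) x" by (simp add: aO_inv1 idt_hom)
  show ?thesis unfolding sig_def rho_def P_cmp[OF idt_hom h]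
    by (simp add: aM_idt aO_inv1 cmp_idl idt_hom idt_P)
qed

lemma F_lin: "lin_functor C D (\<lambda>x. (x,0)) (\<lambda>x y f. P 0 x y f)"
  unfolding lin_functor_def
proof (intro conjI allI ballI)
  fix x y f assume f: "f \<in> Hom C x y"
  show "P 0 x y f \<in> Hom D (x, 0) (y, 0)" using f unfolding D_Hom by simp
next
  fix x y z f g assume f: "f \<in> Hom C x y" and g: "g \<in> Hom C y z"
  show "P 0 x z (cmp C g f) = cmp D (P 0 y z g) (P 0 x y f)"
    using P_cmp[of g 0 y z f 0 x] f g by (simp add: aM0 D_cmp)
next
  fix x show "P 0 x x (idt C x) = idt D (x, 0)" by (simp add: D_idt idt_P)
next
  fix x y f g assume f: "f \<in> Hom C x y" and g: "g \<in> Hom C x y"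
  show "P 0 x y (f + g) = P 0 x y f + P 0 x y g"
    using f g by (auto simp: orb_P1_def aM_add fun_eq_iff)
next
  fix a x y f assume f: "f \<in> Hom C x y"
  show "P 0 x y (scl C a f) = scl D a (P 0 x y f)"
    using f by (auto simp: orb_P1_def aM_scl fun_eq_iff D_scl scl0)
qed

lemma Dhom_elim: "g \<in> Hom D (x,a) (y,b) \<Longrightarrow>
   \<exists>g0 \<in> Hom C (aO (-b+a) x) y. g = P (-b+a) x y g0"
  unfolding D_Hom by blast

lemma key_obj: "aO b (aO (-b+a) x) = aO a x"
  by (simp add: aO_add[symmetric])

lemma H_hom: "g \<in> Hom D (x,a) (y,b) \<Longrightarrow> g (b,a) \<in> Hom C (aO a x) (aO b y)"
  using Dhom_elim[of g x a y b] aM_hom[of _ "aO (-b+a) x" y b]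
  by (auto simp: orb_P1_def key_obj)

lemma H_lin: "lin_functor D C (\<lambda>u. aO (snd u) (fst u)) (\<lambda>u v g. g (snd v, snd u))"
  unfolding lin_functor_def split_paired_All
proof (intro conjI allI ballI)
  fix x a y b g assume "g \<in> Hom D (x,a) (y,b)"
  then show "g (snd (y, b), snd (x, a)) \<in> Hom C (aO (snd (x, a)) (fst (x, a))) (aO (snd (y, b)) (fst (y, b)))"
    using H_hom by simp
next
  fix x a y b z c f g assume f: "f \<in> Hom D (x,a) (y,b)" and g: "g \<in> Hom D (y,b) (z,c)"
  have "orb_cmp C g f (c, a) = cmp C (g (c, b)) (f (b, a))"
  proof (rule single)
    fix \<gamma> assume ne: "f (\<gamma>, a) \<noteq> 0"
    obtain f0 where "f = P (-b+a) x y f0" using Dhom_elim[OF f] by blast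
    with ne have "- \<gamma> + a = -b + a" by (auto simp: orb_P1_def split: if_splits)
    then show "\<gamma> = b" by simp
  next
    show "cmp C (g (c, b)) 0 = 0" using cmp0r[OF H_hom[OF g]] .
  qed
  then show "cmp D g f (snd (z, c), snd (x, a)) = cmp C (g (snd (z, c), snd (y, b))) (f (snd (y, b), snd (x, a)))"
    by (simp add: D_cmp)
next
  fix x a show "idt D (x, a) (snd (x, a), snd (x, a)) = idt C (aO (snd (x, a)) (fst (x, a)))"
    by (simp add: D_idt orb_idt_def)
next
  fix x a y b f g
  show "(f + g) (snd (y, b), snd (x, a)) = f (snd (y, b), snd (x, a)) + g (snd (y, b), snd (x, a))"
    by simp
next
  fix c x a y b f
  show "scl D c f (snd (y, b), snd (x, a)) = scl C c (f (snd (y, b), snd (x, a)))"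
    by (simp add: D_scl)
qed

lemma eta_iso: "nat_iso C C (\<lambda>x. x) (\<lambda>x y f. f)
     (\<lambda>x. aO (snd (x, 0::'g)) (fst (x, 0::'g)))
     (\<lambda>x y f. P 0 x y f (snd (y, 0::'g), snd (x, 0::'g))) (\<lambda>x. idt C x)"
  unfolding nat_iso_def is_iso_def
  by (auto simp: idt_hom cmp_idl cmp_idr orb_P1_def aM0 intro!: bexI[of _ "idt C _"])

lemma eps_iso: "nat_iso D D (\<lambda>u. (aO (snd u) (fst u), 0))
     (\<lambda>u v g. P 0 (aO (snd u) (fst u)) (aO (snd v) (fst v)) (g (snd v, snd u)))
     (\<lambda>u. u) (\<lambda>u v g. g) (\<lambda>u. sig (snd u) (fst u))"
  unfolding nat_iso_def split_paired_All
proof (intro conjI allI ballI)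
  fix x a
  show "is_iso D (aO (snd (x, a)) (fst (x, a)), 0) (x, a) (sig (snd (x, a)) (fst (x, a)))"
    unfolding is_iso_def using sig_hom rho_hom sr rs by (auto simp: D_cmp D_idt intro!: bexI[of _ "rho a x"])
next
  fix x a y b g assume g: "g \<in> Hom D (x,a) (y,b)"
  obtain g0 where g0: "g0 \<in> Hom C (aO (-b+a) x) y" and ge: "g = P (-b+a) x y g0"
    using Dhom_elim[OF g] by blast
  have h1: "idt C x \<in> Hom C (aO (-a) (aO a x)) x" by (simp add: aO_inv1 idt_hom)
  have h2: "idt C y \<in> Hom C (aO (-b) (aO b y)) y" by (simp add: aO_inv1 idt_hom)
  have gba: "g (b,a) = aM b (aO (-b+a) x) y g0" unfolding ge by (simp add: orb_P1_def)
  have gh: "g (b,a) \<in> Hom C (aO 0 (aO a x)) (aO b y)" using H_hom[OF g] by simp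
  have "cmp D g (sig a x) = P (-b + a + -a) (aO a x) y (cmp C g0 (aM (-b+a) (aO (-a) (aO a x)) x (idt C x)))"
    unfolding D_cmp sig_def ge by (rule P_cmp[OF g0 h1])
  also have "\<dots> = P (-b) (aO a x) y g0"
    using g0 by (simp add: aO_inv1 aM_idt cmp_idr add.assoc)
  finally have L1: "cmp D g (sig a x) = P (-b) (aO a x) y g0" .
  have "cmp D (sig b y) (P 0 (aO a x) (aO b y) (g (b,a)))
      = P (-b + 0) (aO a x) y (cmp C (idt C y) (aM (-b) (aO 0 (aO a x)) (aO b y) (g (b,a))))"
    unfolding D_cmp sig_def by (rule P_cmp[OF h2 gh])
  also have "aM (-b) (aO 0 (aO a x)) (aO b y) (g (b,a)) = g0"
  proof -
    have "aM (-b) (aO 0 (aO a x)) (aO b y) (g (b,a))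
        = aM (-b) (aO b (aO (-b+a) x)) (aO b y) (aM b (aO (-b+a) x) y g0)"
      by (simp add: gba key_obj)
    also have "\<dots> = aM (-b + b) (aO (-b+a) x) y g0" using aM_gadd[OF g0, of "-b" b] by simp
    also have "\<dots> = g0" using aM0[OF g0] by simp
    finally show ?thesis .
  qed
  finally have L2: "cmp D (sig b y) (P 0 (aO a x) (aO b y) (g (b,a))) = P (-b) (aO a x) y g0"
    using g0 by (simp add: cmp_idl)
  show "cmp D g (sig (snd (x, a)) (fst (x, a))) =
        cmp D (sig (snd (y, b)) (fst (y, b)))
          (P 0 (aO (snd (x, a)) (fst (x, a))) (aO (snd (y, b)) (fst (y, b))) (g (snd (y, b), snd (x, a))))"
    using L1 L2 by simp
qed

lemma weq: "weq_functor C aO aM D smash_actO smash_actM (\<lambda>x. (x,0)) (\<lambda>x y f. P 0 x y f) rho"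
  unfolding weq_functor_def
proof (intro conjI allI ballI)
  show "lin_functor C D (\<lambda>x. (x, 0)) (P 0)" using F_lin by simp
next
  fix a x
  show "is_iso D (smash_actO a (x, 0)) (aO a x, 0) (rho a x)"
    unfolding is_iso_def smash_actO_def using sig_hom rho_hom sr rs by (auto simp: D_cmp D_idt intro!: bexI[of _ "sig a x"])
next
  fix a x y f assume f: "f \<in> Hom C x y"
  have "cmp D (P 0 (aO a x) (aO a y) (aM a x y f)) (rho a x)
     = P (0 + a) x (aO a y) (cmp C (aM a x y f) (aM 0 (aO a x) (aO a x) (idt C (aO a x))))"
    unfolding D_cmp rho_def using P_cmp[of "aM a x y f" 0 "aO a x" "aO a y" "idt C (aO a x)" a x] f
    by (simp add: aM_hom idt_hom)
  also have "\<dots> = P a x (aO a y) (aM a x y f)"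
    using f by (simp add: aM0 idt_hom cmp_idr[OF aM_hom[OF f]])
  finally have L1: "cmp D (P 0 (aO a x) (aO a y) (aM a x y f)) (rho a x) = P a x (aO a y) (aM a x y f)" .
  have "cmp D (rho a y) (P 0 x y f) = P (a + 0) x (aO a y) (cmp C (idt C (aO a y)) (aM a (aO 0 x) y f))"
    unfolding D_cmp rho_def using P_cmp[of "idt C (aO a y)" a y "aO a y" f 0 x] f
    by (simp add: idt_hom)
  also have "\<dots> = P a x (aO a y) (aM a x y f)"
    using f by (simp add: cmp_idl[OF aM_hom[OF f]])
  finally show "cmp D (P 0 (aO a x) (aO a y) (aM a x y f)) (rho a x) =
       cmp D (rho a y) (smash_actM a (x, 0) (y, 0) (P 0 x y f))"
    using L1 by (simp add: smash_actM_def)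
next
  fix a b x
  have "cmp D (rho b (aO a x)) (rho a x)
      = P (b + a) x (aO b (aO a x)) (cmp C (idt C (aO b (aO a x))) (aM b (aO a x) (aO a x) (idt C (aO a x))))"
    unfolding D_cmp rho_def by (rule P_cmp[OF idt_hom idt_hom])
  also have "\<dots> = rho (b + a) x" by (simp add: aM_idt rho_def aO_add)
  finally show "cmp D (rho b (aO a x)) (smash_actM b (smash_actO a (x, 0)) (aO a x, 0) (rho a x)) = rho (b + a) x"
    by (simp add: smash_actM_def)
qed

end

theorem mainTheorem13:
  fixes C :: "('o, 'm::ab_group_add, 'k::comm_ring_1) lincat"
    and aO :: "'g::group_add \<Rightarrow> 'o \<Rightarrow> 'o"
    and aM :: "'g \<Rightarrow> 'o \<Rightarrow> 'o \<Rightarrow> 'm \<Rightarrow> 'm"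
  assumes "Gcat C aO aM"
  shows "\<exists>Fo Fm \<rho>.
           weq_functor C aO aM (smash_orbit C aO aM) smash_actO smash_actM Fo Fm \<rho>
         \<and> equivalence C (smash_orbit C aO aM) Fo Fm"
proof -
  interpret gc C aO aM by (rule gc.intro[OF assms])
  have eq: "equivalence C D (\<lambda>x. (x,0)) (\<lambda>x y f. P 0 x y f)"
    unfolding equivalence_def
    apply (rule conjI[OF F_lin])
    apply (rule exI[of _ "\<lambda>u. aO (snd u) (fst u)"])
    apply (rule exI[of _ "\<lambda>u v g. g (snd v, snd u)"])
    apply (rule exI[of _ "\<lambda>x. idt C x"])
    apply (rule exI[of _ "\<lambda>u. sig (snd u) (fst u)"])
    apply (rule conjI[OF H_lin])
    apply (rule conjI[OF eta_iso])
    apply (rule eps_iso)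
    done
  show ?thesis
    apply (rule exI[of _ "\<lambda>x. (x,0)"])
    apply (rule exI[of _ "\<lambda>x y f. P 0 x y f"])
    apply (rule exI[of _ rho])
    by (rule conjI[OF weq eq])
qed

end
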